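(* Let $\{f_j\}_{j=1}^m$, $m\ge2$, be an iterated function system of similarities of $\mathbb{C}$ with common contraction ratio $|\lambda|<1$ and connected attractor $A=\bigcup_j A_j$, $A_j=f_j(A)$, which is invertible with map $q:A\to A$ and has finite nonempty overlap set $\mathcal{O}$. Suppose $q$ is critically non-recurrent. Then there exist constants $C\ge1$ and $\delta_1>0$ such that for every connected set $S\subset A$ and every integer $n\ge0$, $$C^{-1}|\lambda|^{-n}\operatorname{diam}S\le\operatorname{diam}q^n(S)\le C|\lambda|^{-n}\operatorname{diam}S,$$ provided either $\operatorname{diam}q^n(S)<\delta_1$ or $|\lambda|^{-n}\operatorname{diam}S<\delta_1$.
   Context: Each $f_j$ is of the form $f_j(z)=|\lambda|e^{i\theta_j}z+d_j$ or $f_j(z)=|\lambda|e^{i\theta_j}\overline{z}+d_j$, and $A$ is the unique nonempty compact set with $A=\bigcup_j f_j(A)$. Invertible means there is a continuous $q:A\to A$ with $q|_{A_j}$ equal to the inverse of $f_j:A\to A_j$ for each $j$. The overlap set is $\mathcal{O}=\bigcup_{i\ne j}(A_i\cap A_j)$. $q$ is critically non-recurrent if for every $z\in\mathcal{O}$ the limit set of $\{q^n(z)\}_{n\ge1}$ does not contain $z$. *)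

theory Defs
  imports "HOL-Analysis.Analysis"
begin

definition similarity_ratio :: "real \<Rightarrow> (complex \<Rightarrow> complex) \<Rightarrow> bool" where
  "similarity_ratio r g \<longleftrightarrow>
     (\<exists>a d. norm a = r \<and> (g = (\<lambda>z. a * z + d) \<or> g = (\<lambda>z. a * cnj z + d)))"

definition ifs_attractor :: "nat \<Rightarrow> (nat \<Rightarrow> complex \<Rightarrow> complex) \<Rightarrow> complex set \<Rightarrow> bool" where
  "ifs_attractor m f A \<longleftrightarrow> A \<noteq> {} \<and> compact A \<and> A = (\<Union>j<m. f j ` A)"

definition ifs_inverse_map ::
  "nat \<Rightarrow> (nat \<Rightarrow> complex \<Rightarrow> complex) \<Rightarrow> complex set \<Rightarrow> (complex \<Rightarrow> complex) \<Rightarrow> bool" where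
  "ifs_inverse_map m f A q \<longleftrightarrow>
     continuous_on A q \<and> q ` A \<subseteq> A \<and> (\<forall>j<m. \<forall>z\<in>A. q (f j z) = z)"

definition overlap_set :: "nat \<Rightarrow> (nat \<Rightarrow> complex \<Rightarrow> complex) \<Rightarrow> complex set \<Rightarrow> complex set" where
  "overlap_set m f A = (\<Union>i<m. \<Union>j<m. if i \<noteq> j then f i ` A \<inter> f j ` A else {})"

definition orbit_limit_set :: "(complex \<Rightarrow> complex) \<Rightarrow> complex \<Rightarrow> complex set" where
  "orbit_limit_set q z =
     {w. \<forall>e>0. \<forall>N. \<exists>n\<ge>N. n \<ge> 1 \<and> dist ((q ^^ n) z) w < e}"

definition critically_non_recurrent :: "complex set \<Rightarrow> (complex \<Rightarrow> complex) \<Rightarrow> bool" where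
  "critically_non_recurrent Ov q \<longleftrightarrow> (\<forall>z\<in>Ov. z \<notin> orbit_limit_set q z)"

end

theory Submission
  imports Defs
begin


lemma diam_union_le:
  fixes X Y :: "complex set"
  assumes "bounded X" "bounded Y" "x \<in> X" "x \<in> Y"
  shows "diameter (X \<union> Y) \<le> diameter X + diameter Y"
proof (rule diameter_le)
  show "X \<union> Y \<noteq> {} \<or> 0 \<le> diameter X + diameter Y" using assms by auto
  fix u v assume u: "u \<in> X \<union> Y" and v: "v \<in> X \<union> Y"
  have dX: "\<And>a b. a \<in> X \<Longrightarrow> b \<in> X \<Longrightarrow> dist a b \<le> diameter X"
    using assms(1) diameter_bounded_bound by blast
  have dY: "\<And>a b. a \<in> Y \<Longrightarrow> b \<in> Y \<Longrightarrow> dist a b \<le> diameter Y"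
    using assms(2) diameter_bounded_bound by blast
  have gX: "0 \<le> diameter X" "0 \<le> diameter Y" using assms diameter_ge_0 by auto
  have t1: "dist u v \<le> dist u x + dist x v" by (rule dist_triangle)
  have "dist u v \<le> diameter X + diameter Y"
  proof (cases "u \<in> X")
    case uX: True
    show ?thesis
    proof (cases "v \<in> X")
      case True then show ?thesis using dX[of u v] uX gX by linarith
    next
      case False then have "v \<in> Y" using v by blast
      then show ?thesis using dX[of u x] dY[of x v] uX assms(3,4) t1 by linarith
    qed
  next
    case uY': False
    then have uY: "u \<in> Y" using u by blast
    show ?thesis
    proof (cases "v \<in> Y")
      case True then show ?thesis using dY[of u v] uY gX by linarith
    next
      case False then have "v \<in> X" using v by blast
      then show ?thesis using dY[of u x] dX[of x v] uY assms(3,4) t1 by linarith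
    qed
  qed
  then show "norm (u - v) \<le> diameter X + diameter Y" by (simp add: dist_norm)
qed

lemma diam_cover_aux:
  fixes S :: "complex set"
  shows "finite T \<Longrightarrow> card T = n \<Longrightarrow> \<forall>X\<in>T. closed X \<Longrightarrow> connected S \<Longrightarrow> bounded S
    \<Longrightarrow> S \<subseteq> \<Union>T \<Longrightarrow> diameter S \<le> (\<Sum>X\<in>T. diameter (S \<inter> X))"
proof (induction n arbitrary: T rule: less_induct)
  case (less n)
  have nn: "\<And>X. 0 \<le> diameter (S \<inter> X)"
    using less.prems(5) by (meson bounded_subset diameter_ge_0 inf_le1)
  show ?case
  proof (cases "\<exists>T1\<in>T. \<exists>T2\<in>T. T1 \<noteq> T2 \<and> S \<inter> T1 \<inter> T2 \<noteq> {}")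
    case True
    then obtain T1 T2 x where T12: "T1 \<in> T" "T2 \<in> T" "T1 \<noteq> T2" "x \<in> S" "x \<in> T1" "x \<in> T2" by blast
    define T' where "T' = insert (T1 \<union> T2) (T - {T1, T2})"
    have fin': "finite T'" using less.prems(1) by (simp add: T'_def)
    have c1: "card (T - {T1,T2}) = card T - 2"
      using T12 less.prems(1) by (simp add: card_Diff_subset)
    have "card T' \<le> card (T - {T1,T2}) + 1"
      unfolding T'_def using less.prems(1) by (simp add: card_insert_if)
    moreover have "card T \<ge> 2"
    proof -
      have "card {T1,T2} \<le> card T" using T12 less.prems(1) by (intro card_mono) auto
      then show ?thesis using T12 by simp
    qed
    ultimately have lt: "card T' < n" using c1 less.prems(2) by linarith
    have cl': "\<forall>X\<in>T'. closed X" using less.prems(3) T12 by (auto simp: T'_def)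
    have cov': "S \<subseteq> \<Union>T'" using less.prems(6) by (auto simp: T'_def)
    have "diameter S \<le> (\<Sum>X\<in>T'. diameter (S \<inter> X))"
      using less.IH[OF lt fin' refl cl' less.prems(4,5) cov'] .
    also have "\<dots> \<le> diameter (S \<inter> (T1 \<union> T2)) + (\<Sum>X\<in>T - {T1,T2}. diameter (S \<inter> X))"
      unfolding T'_def using less.prems(1) nn by (simp add: sum.insert_if)
    also have "diameter (S \<inter> (T1 \<union> T2)) \<le> diameter (S \<inter> T1) + diameter (S \<inter> T2)"
    proof -
      have "S \<inter> (T1 \<union> T2) = (S \<inter> T1) \<union> (S \<inter> T2)" by blast
      then show ?thesis using diam_union_le[of "S \<inter> T1" "S \<inter> T2" x] T12 less.prems(5)
        by (metis Int_iff bounded_Int)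
    qed
    also have "diameter (S \<inter> T1) + diameter (S \<inter> T2) + (\<Sum>X\<in>T - {T1,T2}. diameter (S \<inter> X))
        = (\<Sum>X\<in>T. diameter (S \<inter> X))"
    proof -
      have "(\<Sum>X\<in>T. diameter (S \<inter> X)) = diameter (S \<inter> T1) + (\<Sum>X\<in>T - {T1}. diameter (S \<inter> X))"
        using less.prems(1) T12 by (simp add: sum.remove)
      also have "(\<Sum>X\<in>T - {T1}. diameter (S \<inter> X)) = diameter (S \<inter> T2) + (\<Sum>X\<in>T - {T1} - {T2}. diameter (S \<inter> X))"
        using less.prems(1) T12 by (intro sum.remove) auto
      finally show ?thesis by (simp add: Diff_insert2[symmetric] insert_commute)
    qed
    finally show ?thesis by linarith
  next
    case False
    show ?thesis
    proof (cases "S = {}")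
      case True then show ?thesis using nn by (simp add: sum_nonneg)
    next
      case ne: False
      then obtain x where "x \<in> S" by blast
      then obtain X where X: "X \<in> T" "x \<in> X" using less.prems(6) by blast
      define B where "B = \<Union>(T - {X})"
      have "closed B" unfolding B_def using less.prems(1,3) by (intro closed_Union) auto
      moreover have "closed X" using less.prems(3) X by auto
      moreover have "X \<inter> B \<inter> S = {}" using False X unfolding B_def by blast
      moreover have "S \<subseteq> X \<union> B" using less.prems(6) unfolding B_def by blast
      ultimately have "X \<inter> S = {} \<or> B \<inter> S = {}" using connected_closedD[OF less.prems(4)] by blast
      then have "S \<subseteq> X" using \<open>x \<in> S\<close> X \<open>S \<subseteq> X \<union> B\<close> by blast
      then have "diameter S = diameter (S \<inter> X)" by (simp add: Int_absorb2)
      also have "\<dots> \<le> (\<Sum>X\<in>T. diameter (S \<inter> X))"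
        using less.prems(1) X nn by (intro member_le_sum) auto
      finally show ?thesis .
    qed
  qed
qed

lemma diam_cover:
  fixes S :: "complex set"
  shows "finite T \<Longrightarrow> \<forall>X\<in>T. closed X \<Longrightarrow> connected S \<Longrightarrow> bounded S
    \<Longrightarrow> S \<subseteq> \<Union>T \<Longrightarrow> diameter S \<le> (\<Sum>X\<in>T. diameter (S \<inter> X))"
  using diam_cover_aux by blast

lemma diam_scale:
  fixes X :: "complex set" and g :: "complex \<Rightarrow> complex"
  assumes "bounded X" "c > 0" "\<And>x y. x \<in> X \<Longrightarrow> y \<in> X \<Longrightarrow> dist (g x) (g y) = c * dist x y"
  shows "diameter (g ` X) = c * diameter X"
proof -
  have dX: "\<And>a b. a \<in> X \<Longrightarrow> b \<in> X \<Longrightarrow> dist a b \<le> diameter X"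
    using assms(1) diameter_bounded_bound by blast
  have bg: "bounded (g ` X)"
    unfolding bounded_two_points using dX assms by (force intro!: exI[of _ "c * diameter X"])
  have dg: "\<And>a b. a \<in> g ` X \<Longrightarrow> b \<in> g ` X \<Longrightarrow> dist a b \<le> diameter (g ` X)"
    using bg diameter_bounded_bound by blast
  have "diameter (g ` X) \<le> c * diameter X"
    apply (rule diameter_le)
    using assms diameter_ge_0 dX by (auto simp: dist_norm[symmetric])
  moreover have "diameter X \<le> diameter (g ` X) / c"
    apply (rule diameter_le)
    using assms diameter_ge_0[OF bg] dg
    by (auto simp: dist_norm[symmetric] field_simps) (metis image_eqI mult.commute)
  ultimately show ?thesis using assms(2) by (simp add: field_simps)
qed



locale ifsq =
  fixes m :: nat and f :: "nat \<Rightarrow> complex \<Rightarrow> complex" and r :: real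
    and A :: "complex set" and q :: "complex \<Rightarrow> complex"
  assumes m2: "m \<ge> 2" and r0: "0 < r" and r1: "r < 1"
    and sim: "\<forall>j<m. similarity_ratio r (f j)"
    and att: "ifs_attractor m f A"
    and inv: "ifs_inverse_map m f A q"
begin

lemma cA: "compact A" and bA: "bounded A" and A_eq: "A = (\<Union>j<m. f j ` A)"
  using att compact_imp_bounded by (auto simp: ifs_attractor_def)

lemma f_dist: "j < m \<Longrightarrow> dist (f j x) (f j y) = r * dist x y"
proof -
  assume "j < m"
  then have "similarity_ratio r (f j)" using sim by blast
  then obtain a d where ad: "norm a = r" "f j = (\<lambda>z. a * z + d) \<or> f j = (\<lambda>z. a * cnj z + d)"
    unfolding similarity_ratio_def by blast
  from ad(2) show ?thesis
  proof
    assume "f j = (\<lambda>z. a * z + d)"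
    then show ?thesis using ad(1) by (simp add: dist_norm norm_mult flip: right_diff_distrib)
  next
    assume "f j = (\<lambda>z. a * cnj z + d)"
    then have "dist (f j x) (f j y) = norm (a * cnj (x - y))"
      by (simp add: dist_norm right_diff_distrib)
    then show ?thesis using ad(1) by (simp add: norm_mult dist_norm flip: complex_cnj_diff)
  qed
qed

lemma f_cont: "j < m \<Longrightarrow> continuous_on A (f j)"
proof -
  assume "j < m"
  then have "similarity_ratio r (f j)" using sim by blast
  then obtain a d where ad: "f j = (\<lambda>z. a * z + d) \<or> f j = (\<lambda>z. a * cnj z + d)"
    unfolding similarity_ratio_def by blast
  then show ?thesis by (auto intro!: continuous_intros)
qed

lemma closed_piece: "j < m \<Longrightarrow> closed (f j ` A)"
  using compact_continuous_image[OF f_cont cA] compact_imp_closed by blast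

lemma piece_sub: "j < m \<Longrightarrow> f j ` A \<subseteq> A"
  using A_eq by blast

lemma q_cont: "continuous_on A q" and qA: "q ` A \<subseteq> A"
  and q_f: "j < m \<Longrightarrow> z \<in> A \<Longrightarrow> q (f j z) = z"
  using inv by (auto simp: ifs_inverse_map_def)

lemma q_dist: "j < m \<Longrightarrow> z \<in> f j ` A \<Longrightarrow> w \<in> f j ` A \<Longrightarrow> dist (q z) (q w) = (1/r) * dist z w"
  using q_f f_dist r0 by auto

lemma diam_q_piece: "j < m \<Longrightarrow> X \<subseteq> f j ` A \<Longrightarrow> diameter (q ` X) = (1/r) * diameter X"
proof -
  assume j: "j < m" and X: "X \<subseteq> f j ` A"
  have "bounded X" using X piece_sub[OF j] bounded_subset[OF bA] by blast
  moreover have "\<And>x y. x \<in> X \<Longrightarrow> y \<in> X \<Longrightarrow> dist (q x) (q y) = (1/r) * dist x y"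
    using q_dist[OF j] X by blast
  ultimately show ?thesis using r0 by (intro diam_scale) auto
qed

lemma qS: "S \<subseteq> A \<Longrightarrow> connected S \<Longrightarrow> q ` S \<subseteq> A \<and> connected (q ` S)"
  using qA q_cont by (meson connected_continuous_image continuous_on_subset image_mono order_trans)

lemma lower: assumes "S \<subseteq> A" "connected S" shows "diameter S \<le> m * r * diameter (q ` S)"
proof -
  define T where "T = (\<lambda>j. f j ` A) ` {..<m}"
  have bq: "bounded (q ` S)" using qS[OF assms] bounded_subset[OF bA] by blast
  have "diameter S \<le> (\<Sum>X\<in>T. diameter (S \<inter> X))"
    using assms closed_piece A_eq bounded_subset[OF bA]
    by (intro diam_cover) (auto simp: T_def)
  also have "\<dots> \<le> of_nat (card T) * (r * diameter (q ` S))"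
  proof (intro sum_bounded_above)
    fix X assume "X \<in> T"
    then obtain j where j: "j < m" "X = f j ` A" by (auto simp: T_def)
    have "diameter (S \<inter> X) = r * diameter (q ` (S \<inter> X))"
      using diam_q_piece[OF j(1), of "S \<inter> X"] j r0 by auto
    also have "\<dots> \<le> r * diameter (q ` S)"
      using r0 bq by (intro mult_left_mono diameter_subset) auto
    finally show "diameter (S \<inter> X) \<le> r * diameter (q ` S)" .
  qed
  also have "\<dots> \<le> m * (r * diameter (q ` S))"
    using r0 diameter_ge_0[OF bq] card_image_le[of "{..<m}" "\<lambda>j. f j ` A"]
    by (intro mult_right_mono) (auto simp: T_def)
  finally show ?thesis by simp
qed

lemma upper: assumes "S \<subseteq> A" "connected S" shows "diameter (q ` S) \<le> m * ((1/r) * diameter S)"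
proof -
  define T where "T = (\<lambda>j. closure (q ` (S \<inter> f j ` A))) ` {..<m}"
  have bq: "bounded (q ` S)" using qS[OF assms] bounded_subset[OF bA] by blast
  have bS: "bounded S" using assms bounded_subset[OF bA] by blast
  have cov: "q ` S \<subseteq> \<Union>T"
  proof
    fix y assume "y \<in> q ` S"
    then obtain s where s: "s \<in> S" "y = q s" by blast
    then obtain j where "j < m" "s \<in> f j ` A" using assms A_eq by blast
    then show "y \<in> \<Union>T" using s by (auto simp: T_def intro!: closure_subset[THEN subsetD])
  qed
  have "diameter (q ` S) \<le> (\<Sum>X\<in>T. diameter (q ` S \<inter> X))"
    using qS[OF assms] bq cov by (intro diam_cover) (auto simp: T_def)
  also have "\<dots> \<le> of_nat (card T) * ((1/r) * diameter S)"
  proof (intro sum_bounded_above)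
    fix X assume "X \<in> T"
    then obtain j where j: "j < m" "X = closure (q ` (S \<inter> f j ` A))" by (auto simp: T_def)
    have bj: "bounded (q ` (S \<inter> f j ` A))" using bq by (rule bounded_subset) auto
    have "diameter (q ` S \<inter> X) \<le> diameter X"
      using bj by (intro diameter_subset) (auto simp: j)
    also have "\<dots> = diameter (q ` (S \<inter> f j ` A))" using j bj diameter_closure by simp
    also have "\<dots> = (1/r) * diameter (S \<inter> f j ` A)" using diam_q_piece[OF j(1)] by auto
    also have "\<dots> \<le> (1/r) * diameter S" using r0 bS by (intro mult_left_mono diameter_subset) auto
    finally show "diameter (q ` S \<inter> X) \<le> (1/r) * diameter S" .
  qed
  also have "\<dots> \<le> m * ((1/r) * diameter S)"
    using r0 diameter_ge_0[OF bS] card_image_le[of "{..<m}" "\<lambda>j. closure (q ` (S \<inter> f j ` A))"]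
    by (intro mult_right_mono) (auto simp: T_def)
  finally show ?thesis .
qed

lemma good: assumes "S \<subseteq> A" "connected S" "S \<inter> overlap_set m f A = {}"
  shows "diameter (q ` S) = (1/r) * diameter S"
proof (cases "S = {}")
  case True then show ?thesis by simp
next
  case False
  then obtain x where "x \<in> S" by blast
  then obtain j where j: "j < m" "x \<in> f j ` A" using assms(1) A_eq by blast
  define B where "B = (\<Union>i\<in>{..<m} - {j}. f i ` A)"
  have "closed B" unfolding B_def using closed_piece by (intro closed_UN) auto
  moreover have "f j ` A \<inter> B \<inter> S = {}"
  proof -
    have "f j ` A \<inter> B \<subseteq> overlap_set m f A"
    proof
      fix z assume z: "z \<in> f j ` A \<inter> B"
      then obtain i where i: "i < m" "i \<noteq> j" "z \<in> f i ` A" unfolding B_def by blast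
      have "z \<in> (if i \<noteq> j then f i ` A \<inter> f j ` A else {})" using i z by simp
      then show "z \<in> overlap_set m f A" unfolding overlap_set_def using i j
        by (intro UN_I[of i] UN_I[of j]) simp_all
    qed
    then show ?thesis using assms(3) by blast
  qed
  moreover have "S \<subseteq> f j ` A \<union> B" using assms(1) A_eq unfolding B_def by blast
  ultimately have "f j ` A \<inter> S = {} \<or> B \<inter> S = {}"
    using connected_closedD[OF assms(2)] closed_piece[OF j(1)] by blast
  then have "S \<subseteq> f j ` A" using \<open>x \<in> S\<close> j \<open>S \<subseteq> f j ` A \<union> B\<close> by blast
  then show ?thesis using diam_q_piece[OF j(1)] by blast
qed

end


lemma funpow_mult_fix: "(q ^^ n) z = z \<Longrightarrow> (q ^^ (n * k)) z = z"
proof (induction k)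
  case 0 then show ?case by simp
next
  case (Suc k)
  have "(q ^^ (n * Suc k)) z = (q ^^ n) ((q ^^ (n * k)) z)"
    by (simp add: funpow_add)
  then show ?case using Suc by simp
qed

lemma point_sep:
  assumes "z \<notin> orbit_limit_set q z"
  shows "\<exists>e>0. \<forall>n\<ge>1. e \<le> dist ((q ^^ n) z) z"
proof -
  from assms obtain e N where e: "e > 0" "\<forall>n\<ge>N. n \<ge> 1 \<longrightarrow> e \<le> dist ((q ^^ n) z) z"
    unfolding orbit_limit_set_def by (auto simp: not_less)
  have nz: "(q ^^ n) z \<noteq> z" if "n \<ge> 1" for n
  proof
    assume "(q ^^ n) z = z"
    then have "(q ^^ (n * (N+1))) z = z" by (rule funpow_mult_fix)
    moreover have "n * (N+1) \<ge> N"
    proof -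
      have h: "N \<le> n * N" using that by (metis mult_1 mult_le_mono1)
      have e: "n * (N+1) = n * N + n" by simp
      show ?thesis using e h by linarith
    qed
    moreover have "n * (N+1) \<ge> 1" using that by simp
    ultimately show False using e by auto
  qed
  define E where "E = insert e ((\<lambda>n. dist ((q ^^ n) z) z) ` {1..<N})"
  have finE: "finite E" unfolding E_def by simp
  have posE: "\<forall>x\<in>E. x > 0" unfolding E_def using e(1) nz by auto
  have "Min E > 0" using finE posE by (simp add: E_def)
  moreover have "Min E \<le> dist ((q ^^ n) z) z" if "n \<ge> 1" for n
  proof (cases "n < N")
    case True then show ?thesis using finE that by (intro Min_le) (auto simp: E_def)
  next
    case False
    then have "e \<le> dist ((q ^^ n) z) z" using e that by auto
    moreover have "Min E \<le> e" using finE by (intro Min_le) (auto simp: E_def)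
    ultimately show ?thesis by linarith
  qed
  ultimately show ?thesis by blast
qed

locale ifsq2 = ifsq +
  assumes fin: "finite (overlap_set m f A)" and ne: "overlap_set m f A \<noteq> {}"
    and ncr: "critically_non_recurrent (overlap_set m f A) q"
begin

lemma eta_exists: "\<exists>\<eta>>0. \<forall>p\<in>overlap_set m f A. \<forall>n\<ge>1. \<eta> \<le> dist ((q ^^ n) p) p"
proof -
  have "\<forall>p\<in>overlap_set m f A. \<exists>e>0. \<forall>n\<ge>1. e \<le> dist ((q ^^ n) p) p"
    using ncr point_sep unfolding critically_non_recurrent_def by blast
  then obtain g where g: "\<forall>p\<in>overlap_set m f A. g p > 0 \<and> (\<forall>n\<ge>1. g p \<le> dist ((q ^^ n) p) p)"
    by metis
  define \<eta> where "\<eta> = Min (g ` overlap_set m f A)"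
  have "\<eta> > 0" unfolding \<eta>_def using fin ne g by simp
  moreover have "\<forall>p\<in>overlap_set m f A. \<forall>n\<ge>1. \<eta> \<le> dist ((q ^^ n) p) p"
  proof (intro ballI allI impI)
    fix p n assume p: "p \<in> overlap_set m f A" and n: "(n::nat) \<ge> 1"
    have "\<eta> \<le> g p" unfolding \<eta>_def using fin p by simp
    then show "\<eta> \<le> dist ((q ^^ n) p) p" using g p n by force
  qed
  ultimately show ?thesis by blast
qed

end

locale ifsq3 = ifsq2 +
  fixes S :: "complex set" and \<eta> :: real
  assumes SA: "S \<subseteq> A" and Sc: "connected S" and eta0: "\<eta> > 0"
    and eta: "\<forall>p\<in>overlap_set m f A. \<forall>n\<ge>1. \<eta> \<le> dist ((q ^^ n) p) p"
begin

definition Sk :: "nat \<Rightarrow> complex set" where "Sk k = (q ^^ k) ` S"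
definition D :: "nat \<Rightarrow> real" where "D k = diameter (Sk k)"
definition Bad :: "nat set" where "Bad = {k. Sk k \<inter> overlap_set m f A \<noteq> {}}"

lemma Sk_prop: "Sk k \<subseteq> A \<and> connected (Sk k)"
proof (induction k)
  case 0 then show ?case using SA Sc by (simp add: Sk_def)
next
  case (Suc k)
  have "Sk (Suc k) = q ` Sk k" by (simp add: Sk_def image_comp)
  then show ?case using qS Suc by simp
qed

lemma Sk_Suc: "Sk (Suc k) = q ` Sk k" by (simp add: Sk_def image_comp)

lemma Sk_bounded: "bounded (Sk k)" using Sk_prop bounded_subset[OF bA] by blast

lemma D_ge0: "0 \<le> D k" unfolding D_def using Sk_bounded diameter_ge_0 by blast

lemma step_up: "D (Suc k) \<le> m * ((1/r) * D k)"
  unfolding D_def Sk_Suc using upper Sk_prop by blast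

lemma step_low: "(1/r) * D k \<le> m * D (Suc k)"
proof -
  have "D k \<le> m * r * D (Suc k)"
    unfolding D_def Sk_Suc using lower Sk_prop by blast
  then show ?thesis using r0 by (simp add: field_simps)
qed

lemma step_good: "k \<notin> Bad \<Longrightarrow> D (Suc k) = (1/r) * D k"
  unfolding D_def Sk_Suc Bad_def using good Sk_prop by blast

lemma pigeon:
  assumes small: "\<forall>j\<in>{a..<b}. D j < \<eta>"
  shows "card ({a..<b} \<inter> Bad) \<le> card (overlap_set m f A)"
proof -
  define P where "P k = (SOME p. p \<in> Sk k \<inter> overlap_set m f A)" for k
  have P: "P k \<in> Sk k \<inter> overlap_set m f A" if "k \<in> Bad" for k
  proof -
    have "\<exists>p. p \<in> Sk k \<inter> overlap_set m f A" using that unfolding Bad_def by auto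
    then show ?thesis unfolding P_def by (rule someI_ex)
  qed
  have neq: "P k \<noteq> P l" if kl: "k < l" "k \<in> {a..<b} \<inter> Bad" "l \<in> {a..<b} \<inter> Bad" for k l
  proof
    assume eq: "P k = P l"
    obtain s where s: "s \<in> S" "P k = (q ^^ k) s" using P[of k] kl unfolding Sk_def by auto
    have "(q ^^ (l - k)) (P k) = (q ^^ l) s"
      using s kl(1) by (simp add: funpow_add[symmetric, unfolded o_def, THEN fun_cong])
    then have i1: "(q ^^ (l - k)) (P k) \<in> Sk l" using s unfolding Sk_def by auto
    have i2: "P k \<in> Sk l" using eq P[of l] kl by auto
    have "dist ((q ^^ (l - k)) (P k)) (P k) \<le> D l"
      unfolding D_def using i1 i2 Sk_bounded diameter_bounded_bound by blast
    also have "\<dots> < \<eta>" using small kl by auto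
    finally have lt: "dist ((q ^^ (l - k)) (P k)) (P k) < \<eta>" .
    have "P k \<in> overlap_set m f A" using P[of k] kl by auto
    then have "\<eta> \<le> dist ((q ^^ (l - k)) (P k)) (P k)" using eta kl(1) by auto
    then show False using lt by linarith
  qed
  have "inj_on P ({a..<b} \<inter> Bad)"
    by (rule inj_onI) (metis neq linorder_neqE_nat)
  moreover have "P ` ({a..<b} \<inter> Bad) \<subseteq> overlap_set m f A" using P by blast
  ultimately show ?thesis using fin by (rule card_inj_on_le)
qed

lemma product:
  "D (a + n) \<le> real m ^ card ({a..<a+n} \<inter> Bad) * ((1/r) ^ n * D a) \<and>
   (1/r) ^ n * D a \<le> real m ^ card ({a..<a+n} \<inter> Bad) * D (a + n)"
proof (induction n)
  case 0 then show ?case by simp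
next
  case (Suc n)
  define c where "c = card ({a..<a+n} \<inter> Bad)"
  have m1: "real m \<ge> 1" using m2 by simp
  have rpos: "1/r > 0" using r0 by simp
  have Da: "0 \<le> D a" by (rule D_ge0)
  show ?case
  proof (cases "a + n \<in> Bad")
    case True
    have set: "{a..<a+Suc n} \<inter> Bad = insert (a+n) ({a..<a+n} \<inter> Bad)" using True by auto
    have card: "card ({a..<a+Suc n} \<inter> Bad) = Suc c" unfolding set c_def by simp
    have u: "D (a + Suc n) \<le> m * ((1/r) * D (a+n))" using step_up[of "a+n"] by simp
    have l: "(1/r) * D (a+n) \<le> m * D (a + Suc n)" using step_low[of "a+n"] by simp
    have IH1: "D (a + n) \<le> real m ^ c * ((1/r) ^ n * D a)" using Suc c_def by simp
    have IH2: "(1/r) ^ n * D a \<le> real m ^ c * D (a + n)" using Suc c_def by simp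
    have "(1/r) * D (a+n) \<le> (1/r) * (real m ^ c * ((1/r) ^ n * D a))"
      by (rule mult_left_mono[OF IH1]) (use rpos in auto)
    then have "m * ((1/r) * D (a+n)) \<le> m * ((1/r) * (real m ^ c * ((1/r) ^ n * D a)))"
      by (rule mult_left_mono) auto
    also have "\<dots> = real m ^ Suc c * ((1/r) ^ Suc n * D a)" by (simp add: algebra_simps)
    finally have g1: "D (a + Suc n) \<le> real m ^ Suc c * ((1/r) ^ Suc n * D a)" using u by linarith
    have "(1/r) ^ Suc n * D a = (1/r) * ((1/r) ^ n * D a)" by simp
    also have "\<dots> \<le> (1/r) * (real m ^ c * D (a + n))"
      by (rule mult_left_mono[OF IH2]) (use rpos in auto)
    also have "\<dots> = real m ^ c * ((1/r) * D (a+n))" by simp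
    also have "\<dots> \<le> real m ^ c * (m * D (a + Suc n))" by (rule mult_left_mono[OF l]) auto
    also have "\<dots> = real m ^ Suc c * D (a + Suc n)" by simp
    finally have g2: "(1/r) ^ Suc n * D a \<le> real m ^ Suc c * D (a + Suc n)" .
    show ?thesis unfolding card using g1 g2 by blast
  next
    case False
    have set: "{a..<a+Suc n} \<inter> Bad = {a..<a+n} \<inter> Bad" using False less_Suc_eq by auto
    have g: "D (a + Suc n) = (1/r) * D (a+n)" using step_good[OF False] by simp
    have IH1: "D (a + n) \<le> real m ^ c * ((1/r) ^ n * D a)" using Suc c_def by simp
    have IH2: "(1/r) ^ n * D a \<le> real m ^ c * D (a + n)" using Suc c_def by simp
    have "(1/r) * D (a + n) \<le> (1/r) * (real m ^ c * ((1/r) ^ n * D a))"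
      by (rule mult_left_mono[OF IH1]) (use rpos in auto)
    moreover have "(1/r) * ((1/r) ^ n * D a) \<le> (1/r) * (real m ^ c * D (a + n))"
      by (rule mult_left_mono[OF IH2]) (use rpos in auto)
    ultimately show ?thesis unfolding set c_def[symmetric] g by (simp add: algebra_simps)
  qed
qed

lemma bounded_product:
  assumes small: "\<forall>j\<in>{a..<a+n}. D j < \<eta>"
  shows "D (a + n) \<le> real m ^ card (overlap_set m f A) * ((1/r) ^ n * D a) \<and>
   (1/r) ^ n * D a \<le> real m ^ card (overlap_set m f A) * D (a + n)"
proof -
  define B where "B = card (overlap_set m f A)"
  define c where "c = card ({a..<a+n} \<inter> Bad)"
  have cB: "c \<le> B" using pigeon[OF small] by (simp add: c_def B_def)
  have mm: "real m ^ c \<le> real m ^ B" using m2 cB by (intro power_increasing) auto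
  have x1: "0 \<le> (1/r) ^ n * D a" using r0 D_ge0 by simp
  have x2: "0 \<le> D (a + n)" using D_ge0 by simp
  show ?thesis using product[of a n] mult_right_mono[OF mm x1] mult_right_mono[OF mm x2]
    unfolding B_def[symmetric] c_def[symmetric] by linarith
qed

end


theorem lemma3p4:
  fixes m :: nat and f :: "nat \<Rightarrow> complex \<Rightarrow> complex" and r :: real
    and A :: "complex set" and q :: "complex \<Rightarrow> complex"
  assumes "m \<ge> 2"
    and "0 < r" and "r < 1"
    and "\<forall>j<m. similarity_ratio r (f j)"
    and "ifs_attractor m f A"
    and "connected A"
    and "ifs_inverse_map m f A q"
    and "finite (overlap_set m f A)" and "overlap_set m f A \<noteq> {}"
    and "critically_non_recurrent (overlap_set m f A) q"
  shows "\<exists>C\<ge>1. \<exists>\<delta>1>0. \<forall>S n. connected S \<and> S \<subseteq> A \<and>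
            (diameter ((q ^^ n) ` S) < \<delta>1 \<or> (1 / r) ^ n * diameter S < \<delta>1) \<longrightarrow>
              (1 / C) * (1 / r) ^ n * diameter S \<le> diameter ((q ^^ n) ` S) \<and>
              diameter ((q ^^ n) ` S) \<le> C * (1 / r) ^ n * diameter S"
proof -
  interpret ifsq2 m f r A q using assms by unfold_locales auto
  obtain \<eta> where eta0: "\<eta> > 0" and eta: "\<forall>p\<in>overlap_set m f A. \<forall>n\<ge>1. \<eta> \<le> dist ((q ^^ n) p) p"
    using eta_exists by blast
  define B where "B = card (overlap_set m f A)"
  define C where "C = real m ^ B"
  define \<delta> where "\<delta> = \<eta> / real m ^ (B+1)"
  have m1: "real m \<ge> 1" using assms(1) by simp
  have C1: "C \<ge> 1" unfolding C_def using m1 by simp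
  have Cpos: "C > 0" using C1 by simp
  have d0: "\<delta> > 0" unfolding \<delta>_def using eta0 m1 by simp
  have Cd: "real m * C * \<delta> = \<eta>" unfolding C_def \<delta>_def using m1 by (simp add: field_simps)
  have Cdle: "C * \<delta> \<le> \<eta>"
  proof -
    have "1 * (C * \<delta>) \<le> real m * (C * \<delta>)" using m1 Cpos d0 by (intro mult_right_mono) auto
    then show ?thesis using Cd by (simp add: mult.assoc)
  qed
  have rho1: "1 \<le> 1 / r" using assms(2,3) by simp
  show ?thesis
  proof (rule exI[of _ C], rule conjI[OF C1], rule exI[of _ \<delta>], rule conjI[OF d0], intro allI impI)
    fix S n assume H: "connected S \<and> S \<subseteq> A \<and>
            (diameter ((q ^^ n) ` S) < \<delta> \<or> (1 / r) ^ n * diameter S < \<delta>)"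
    interpret T: ifsq3 m f r A q S \<eta> using H eta0 eta by unfold_locales auto
    have D0: "T.D 0 = diameter S" by (simp add: T.D_def T.Sk_def)
    have Dn: "T.D n = diameter ((q ^^ n) ` S)" by (simp add: T.D_def T.Sk_def)
    have small: "\<forall>j<n. T.D j < \<eta>"
    proof (cases "(1 / r) ^ n * diameter S < \<delta>")
      case True
      have "k \<le> n \<Longrightarrow> T.D k < \<eta>" for k
      proof (induction k rule: less_induct)
        case (less k)
        have "\<forall>j\<in>{0..<0+k}. T.D j < \<eta>" using less by auto
        from T.bounded_product[OF this]
        have "T.D k \<le> C * ((1/r) ^ k * T.D 0)" by (simp add: C_def B_def)
        also have "\<dots> \<le> C * ((1/r) ^ n * T.D 0)"
          using less.prems rho1 Cpos T.D_ge0 by (intro mult_left_mono mult_right_mono power_increasing) auto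
        also have "\<dots> < C * \<delta>" using True D0 Cpos by simp
        finally show ?case using Cdle by linarith
      qed
      then show ?thesis by simp
    next
      case False
      then have Dnd: "T.D n < \<delta>" using H Dn by simp
      have "i \<le> n \<Longrightarrow> \<forall>j. n - i \<le> j \<and> j \<le> n \<longrightarrow> T.D j < \<eta>" for i
      proof (induction i)
        case 0
        have "\<delta> \<le> C * \<delta>" using C1 d0 by simp
        then show ?case using Dnd Cdle by (auto intro: le_antisym)
      next
        case (Suc i)
        define k where "k = n - Suc i"
        have IH: "\<forall>j. n - i \<le> j \<and> j \<le> n \<longrightarrow> T.D j < \<eta>" using Suc by simp
        have kk: "k + 1 = n - i" "k + 1 + i = n" using Suc.prems by (simp_all add: k_def)
        have "\<forall>j\<in>{k+1..<(k+1)+i}. T.D j < \<eta>" using IH kk by auto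
        from T.bounded_product[OF this]
        have bp0: "(1/r) ^ i * T.D (k+1) \<le> C * T.D (k+1+i)" by (simp add: C_def B_def)
        then have bp: "(1/r) ^ i * T.D (k+1) \<le> C * T.D n" using kk(2) by simp
        have "1 * T.D (k+1) \<le> (1/r) ^ i * T.D (k+1)"
          using rho1 T.D_ge0 by (intro mult_right_mono one_le_power) auto
        then have a1: "T.D (k+1) \<le> C * T.D n" using bp by simp
        have "1 * T.D k \<le> (1/r) * T.D k" using rho1 T.D_ge0 by (intro mult_right_mono) auto
        then have a2: "T.D k \<le> (1/r) * T.D k" by simp
        have a3: "(1/r) * T.D k \<le> m * T.D (Suc k)" by (rule T.step_low)
        have "T.D k \<le> real m * (C * T.D n)"
          using a1 a2 a3 m1 by (smt (verit) Suc_eq_plus1 mult_left_mono)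
        also have "\<dots> < real m * (C * \<delta>)" using Dnd Cpos m1 by simp
        finally have "T.D k < \<eta>" using Cd by (simp add: mult.assoc)
        then show ?case using IH k_def by (metis Suc_diff_Suc Suc.prems Suc_le_lessD le_antisym not_less_eq_eq)
      qed
      then show ?thesis using diff_le_self by (metis diff_diff_cancel le_refl less_or_eq_imp_le)
    qed
    then have "\<forall>j\<in>{0..<0+n}. T.D j < \<eta>" by simp
    from T.bounded_product[OF this]
    have h1: "T.D n \<le> C * ((1/r) ^ n * T.D 0)" and h2: "(1/r) ^ n * T.D 0 \<le> C * T.D n"
      by (simp_all add: C_def B_def)
    have "(1/C) * ((1/r) ^ n * T.D 0) \<le> (1/C) * (C * T.D n)"
      by (rule mult_left_mono[OF h2]) (use Cpos in simp)
    also have "\<dots> = T.D n" using Cpos by simp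
    finally have g2: "(1/C) * ((1/r) ^ n * T.D 0) \<le> T.D n" .
    have "(1 / C) * (1 / r) ^ n * diameter S \<le> diameter ((q ^^ n) ` S)"
      using g2 unfolding D0 Dn by (simp add: mult.assoc)
    moreover have "diameter ((q ^^ n) ` S) \<le> C * (1 / r) ^ n * diameter S"
      using h1 unfolding D0 Dn by (simp add: mult.assoc)
    ultimately show "(1 / C) * (1 / r) ^ n * diameter S \<le> diameter ((q ^^ n) ` S) \<and>
              diameter ((q ^^ n) ` S) \<le> C * (1 / r) ^ n * diameter S" by blast
  qed
qed


end
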